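(* Let $L$ be a positive integer and $U$ a real number with $L > \frac{8}{U}$. Consider, for real $\Lambda$, the equation $$\sin q - \Lambda = \frac{U}{4}\cot\left(\frac{qL}{2}\right)$$ for $q\in[0,2\pi)$. This equation has exactly $L$ branches of solutions $q_\ell(\Lambda)$, $\ell=1,\dots,L$ (real-valued functions of $\Lambda\in\mathbb{R}$), with the properties (i) $(\ell-1)\frac{2\pi}{L} \le q_\ell(\Lambda) \le \ell\frac{2\pi}{L}$; (ii) $\frac{d q_\ell(\Lambda)}{d\Lambda} > 0$; (iii) $\lim_{\Lambda\to-\infty} q_\ell(\Lambda) = (\ell-1)\frac{2\pi}{L}$ and $\lim_{\Lambda\to\infty} q_\ell(\Lambda) = \ell\frac{2\pi}{L}$.
   Context: The inequality $L>8/U$ is called the Takahashi condition. A branch of solutions means a function $\Lambda\mapsto q(\Lambda)$ with $q(\Lambda)\in[0,2\pi)$ satisfying the equation for every real $\Lambda$. *)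

theory Defs
  imports "HOL-Analysis.Analysis"
begin

text \<open>Since cot is singular where
  sin(q L/2) = 0 (and Isabelle's total cot would return 0 there), we require that
  cot(q L/2) is defined, i.e. sin(q L/2) is nonzero.\<close>
definition takahashi_eq :: "real \<Rightarrow> nat \<Rightarrow> real \<Rightarrow> real \<Rightarrow> bool" where
  "takahashi_eq U L \<Lambda> q \<longleftrightarrow>
     sin (q * real L / 2) \<noteq> 0 \<and> sin q - \<Lambda> = U / 4 * cot (q * real L / 2)"

end

theory Submission imports Defs begin

lemma cot_big:
  fixes K :: real
  shows "\<exists>t::real. 0 < t \<and> t < 1 \<and> cot t > K"
proof -
  define t where "t = min (1/2) (1 / (4 * (\<bar>K\<bar> + 1)))"
  have t0: "0 < t" and t1: "t \<le> 1/2" and t2: "t \<le> 1 / (4 * (\<bar>K\<bar> + 1))"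
    by (auto simp: t_def)
  have "t \<le> pi/3" using t1 pi_gt3 by linarith
  then have c: "cos t \<ge> 1/2" using cos_monotone_0_pi_le[of t "pi/3"] t0 cos_60 by simp
  have s0: "sin t > 0" using t1 t0 pi_gt3 by (intro sin_gt_zero) auto
  have s1: "sin t \<le> t" using sin_x_le_x t0 by simp
  have "cot t = cos t / sin t" by (simp add: cot_def)
  also have "\<dots> \<ge> (1/2) / t"
    using c s0 s1 t0 by (intro frac_le) auto
  finally have "cot t \<ge> 1 / (2*t)" by simp
  moreover have "1 / (2*t) \<ge> 2 * (\<bar>K\<bar> + 1)"
    using t2 t0 by (auto simp: field_simps)
  ultimately have h: "2 * (\<bar>K\<bar> + 1) \<le> cot t" by (rule order_trans[rotated])
  have "K < 2 * (\<bar>K\<bar> + 1)" by (simp add: abs_if)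
  then have "cot t > K" using h by (rule less_le_trans)
  then show ?thesis using t0 t1 by (intro exI[of _ t]) auto
qed

lemma inverse_branch:
  fixes F F' :: "real \<Rightarrow> real" and a b :: real
  assumes ab: "a < b"
    and der: "\<And>x. a < x \<Longrightarrow> x < b \<Longrightarrow> (F has_real_derivative F' x) (at x) \<and> F' x > 0"
    and lo: "\<And>M. \<exists>x. a < x \<and> x < b \<and> F x < M"
    and hi: "\<And>M. \<exists>x. a < x \<and> x < b \<and> F x > M"
  shows "\<exists>g. (\<forall>\<Lambda>. a < g \<Lambda> \<and> g \<Lambda> < b \<and> F (g \<Lambda>) = \<Lambda>) \<and>
            (\<forall>x \<Lambda>. a < x \<longrightarrow> x < b \<longrightarrow> F x = \<Lambda> \<longrightarrow> x = g \<Lambda>) \<and>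
            (\<forall>\<Lambda>. \<exists>D. (g has_real_derivative D) (at \<Lambda>) \<and> D > 0) \<and>
            (g \<longlongrightarrow> a) at_bot \<and> (g \<longlongrightarrow> b) at_top"
proof -
  have mono: "F x < F y" if "a < x" "x < y" "y < b" for x y
  proof (rule DERIV_pos_imp_increasing[OF that(2)])
    fix z assume z: "x \<le> z" "z \<le> y"
    then have "a < z" "z < b" using that by linarith+
    then show "\<exists>D. (F has_real_derivative D) (at z) \<and> D > 0" using der by blast
  qed
  have uniq: "x = y" if "a < x" "x < b" "a < y" "y < b" "F x = F y" for x y
  proof (rule ccontr)
    assume "x \<noteq> y"
    then consider "x < y" | "y < x" by linarith
    then show False
    proof cases
      case 1 then show False using mono[of x y] that by linarith
    next
      case 2 then show False using mono[of y x] that by linarith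
    qed
  qed
  have ex: "\<exists>x. a < x \<and> x < b \<and> F x = \<Lambda>" for \<Lambda>
  proof -
    obtain x1 where x1: "a < x1" "x1 < b" "F x1 < \<Lambda>" using lo by blast
    obtain x2 where x2: "a < x2" "x2 < b" "F x2 > \<Lambda>" using hi by blast
    have "x1 \<le> x2"
    proof (rule ccontr)
      assume "\<not> x1 \<le> x2"
      then have "F x2 < F x1" using mono[of x2 x1] x1 x2 by linarith
      then show False using x1 x2 by linarith
    qed
    moreover have "\<forall>x. x1 \<le> x \<and> x \<le> x2 \<longrightarrow> isCont F x"
    proof (intro allI impI)
      fix x assume "x1 \<le> x \<and> x \<le> x2"
      then have "a < x" "x < b" using x1 x2 by linarith+
      then show "isCont F x" using der DERIV_isCont by blast
    qed
    ultimately obtain x where "x1 \<le> x" "x \<le> x2" "F x = \<Lambda>"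
      using IVT[of F x1 \<Lambda> x2] x1 x2 by auto
    then show ?thesis using x1 x2 by (intro exI[of _ x]) auto
  qed
  define g where "g \<Lambda> = (SOME x. a < x \<and> x < b \<and> F x = \<Lambda>)" for \<Lambda>
  have g: "a < g \<Lambda> \<and> g \<Lambda> < b \<and> F (g \<Lambda>) = \<Lambda>" for \<Lambda>
    unfolding g_def using someI_ex[OF ex] by blast
  have gu: "x = g \<Lambda>" if "a < x" "x < b" "F x = \<Lambda>" for x \<Lambda>
    using uniq[of x "g \<Lambda>"] g[of \<Lambda>] that by auto
  have gd: "\<exists>D. (g has_real_derivative D) (at \<Lambda>) \<and> D > 0" for \<Lambda>
  proof -
    define x where "x = g \<Lambda>"
    have x: "a < x" "x < b" "F x = \<Lambda>" using g x_def by auto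
    define d where "d = min (x - a) (b - x) / 2"
    have d: "0 < d" using x by (auto simp: d_def)
    have zint: "a < z \<and> z < b" if "\<bar>z - x\<bar> \<le> d" for z
    proof -
      have zz: "z - x \<le> d" "x - z \<le> d" using that by (simp_all add: abs_le_iff)
      have dd: "2 * d \<le> x - a" "2 * d \<le> b - x" by (simp_all add: d_def)
      show ?thesis using zz dd x d by linarith
    qed
    have "isCont g (F x)"
    proof (rule isCont_inverse_function[where f=F and g=g and x=x, OF d])
      fix z assume "\<bar>z - x\<bar> \<le> d"
      then have zi: "a < z" "z < b" using zint by blast+
      show "g (F z) = z" using gu[OF zi refl] by simp
    next
      fix z assume "\<bar>z - x\<bar> \<le> d"
      then have zi: "a < z" "z < b" using zint by blast+
      from der[OF zi] have "(F has_real_derivative F' z) (at z)" by blast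
      then show "isCont F z" by (rule DERIV_isCont)
    qed
    then have cg: "isCont g \<Lambda>" using x by simp
    have D: "(F has_real_derivative F' (g \<Lambda>)) (at (g \<Lambda>))" "F' (g \<Lambda>) > 0"
      using der[OF x(1) x(2)] unfolding x_def by blast+
    have gy: "F (g y) = y" for y using g by blast
    have "(g has_real_derivative inverse (F' (g \<Lambda>))) (at \<Lambda>)"
      by (rule DERIV_inverse_function[OF D(1) _ _ _ _ cg, of "\<Lambda> - 1" "\<Lambda> + 1"])
         (use D(2) gy in simp_all)
    moreover have "inverse (F' (g \<Lambda>)) > 0" using D(2) by simp
    ultimately show ?thesis by blast
  qed
  have lim1: "(g \<longlongrightarrow> a) at_bot"
  proof (rule order_tendstoI)
    fix y assume "y < a"
    then have "\<forall>\<Lambda>. y < g \<Lambda>" using g by (blast intro: less_trans)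
    then show "eventually (\<lambda>\<Lambda>. y < g \<Lambda>) at_bot" by (rule always_eventually)
  next
    fix y assume y: "a < y"
    define z where "z = (a + min y b) / 2"
    have z: "a < z" "z < b" "z < y" using y ab by (auto simp: z_def)
    have "g \<Lambda> < y" if "\<Lambda> \<le> F z - 1" for \<Lambda>
    proof (rule ccontr)
      assume "\<not> g \<Lambda> < y"
      then have "z < g \<Lambda>" using z by auto
      then have "F z < F (g \<Lambda>)" using mono[of z "g \<Lambda>"] z g by auto
      then show False using g[of \<Lambda>] that by auto
    qed
    then show "eventually (\<lambda>\<Lambda>. g \<Lambda> < y) at_bot"
      unfolding eventually_at_bot_linorder by blast
  qed
  have lim2: "(g \<longlongrightarrow> b) at_top"
  proof (rule order_tendstoI)
    fix y assume "b < y"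
    then have "\<forall>\<Lambda>. g \<Lambda> < y" using g by (blast intro: less_trans)
    then show "eventually (\<lambda>\<Lambda>. g \<Lambda> < y) at_top" by (rule always_eventually)
  next
    fix y assume y: "y < b"
    define z where "z = (b + max y a) / 2"
    have z: "a < z" "z < b" "y < z" using y ab by (auto simp: z_def)
    have "y < g \<Lambda>" if "\<Lambda> \<ge> F z + 1" for \<Lambda>
    proof (rule ccontr)
      assume "\<not> y < g \<Lambda>"
      then have "g \<Lambda> < z" using z by auto
      then have "F (g \<Lambda>) < F z" using mono[of "g \<Lambda>" z] z g by auto
      then show False using g[of \<Lambda>] that by auto
    qed
    then show "eventually (\<lambda>\<Lambda>. y < g \<Lambda>) at_top"
      unfolding eventually_at_top_linorder by blast
  qed
  show ?thesis using g gu gd lim1 lim2 by (intro exI[of _ g]) blast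
qed

lemma sin_nonzero_between:
  fixes y :: real and k :: nat
  assumes "real k * pi < y" "y < (real k + 1) * pi"
  shows "sin y \<noteq> 0"
proof
  assume "sin y = 0"
  then obtain i :: int where i: "y = of_int i * pi" by (auto simp: sin_zero_iff_int2)
  have "real k < of_int i" using assms(1) i by (simp add: mult_less_cancel_right pi_gt_zero)
  moreover have "of_int i < real k + 1" using assms(2) i by (simp add: mult_less_cancel_right pi_gt_zero)
  ultimately have "int k < i" "i < int k + 1" by linarith+
  then show False by linarith
qed

lemma cot_shift: "cot (x + real n * pi) = cot x"
  by (simp add: cot_def sin_add cos_add)

theorem mainTheorem1:
  fixes L :: nat and U :: real
  assumes "L > 0" and "U > 0" and "real L > 8 / U"
  shows "\<exists>q :: nat \<Rightarrow> real \<Rightarrow> real.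
     (\<forall>\<Lambda>. {x \<in> {0..<2*pi}. takahashi_eq U L \<Lambda> x} = (\<lambda>l. q l \<Lambda>) ` {1..L}
           \<and> inj_on (\<lambda>l. q l \<Lambda>) {1..L}) \<and>
     (\<forall>l\<in>{1..L}.
        (\<forall>\<Lambda>. (real l - 1) * (2*pi / real L) \<le> q l \<Lambda> \<and> q l \<Lambda> \<le> real l * (2*pi / real L)) \<and>
        (\<forall>\<Lambda>. \<exists>D. (q l has_real_derivative D) (at \<Lambda>) \<and> D > 0) \<and>
        (q l \<longlongrightarrow> (real l - 1) * (2*pi / real L)) at_bot \<and>
        (q l \<longlongrightarrow> real l * (2*pi / real L)) at_top)"
proof -
  have L0: "real L > 0" using assms(1) by simp
  have UL: "U * real L > 8" using assms(2,3) by (simp add: field_simps)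
  define F where "F x = sin x - U / 4 * cot (x * real L / 2)" for x
  define F' where "F' x = cos x - U / 4 * (- inverse ((sin (x * real L / 2))\<^sup>2) * (real L / 2))" for x
  define A where "A l = (real l - 1) * (2*pi / real L)" for l :: nat
  define B where "B l = real l * (2*pi / real L)" for l :: nat
  have scale: "x * real L / 2 = (x * real L / (2*pi)) * pi" for x using pi_gt_zero by (simp add: field_simps)
  have sin_nz: "sin (x * real L / 2) \<noteq> 0" if "l \<ge> 1" "A l < x" "x < B l" for l x
  proof -
    have "real (l - 1) * pi < x * real L / 2"
      using that L0 pi_gt_zero by (simp add: A_def of_nat_diff field_simps)
    moreover have "x * real L / 2 < (real (l - 1) + 1) * pi"
      using that L0 pi_gt_zero by (simp add: B_def of_nat_diff field_simps)
    ultimately show ?thesis by (rule sin_nonzero_between)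
  qed
  have branch: "\<exists>g. (\<forall>\<Lambda>. A l < g \<Lambda> \<and> g \<Lambda> < B l \<and> F (g \<Lambda>) = \<Lambda>) \<and>
            (\<forall>x \<Lambda>. A l < x \<longrightarrow> x < B l \<longrightarrow> F x = \<Lambda> \<longrightarrow> x = g \<Lambda>) \<and>
            (\<forall>\<Lambda>. \<exists>D. (g has_real_derivative D) (at \<Lambda>) \<and> D > 0) \<and>
            (g \<longlongrightarrow> A l) at_bot \<and> (g \<longlongrightarrow> B l) at_top" if l: "l \<in> {1..L}" for l
  proof (rule inverse_branch)
    show "A l < B l" using L0 pi_gt_zero by (simp add: A_def B_def field_simps)
  next
    fix x assume x: "A l < x" "x < B l"
    have s: "sin (x * real L / 2) \<noteq> 0" using sin_nz[OF _ x] l by auto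
    have d1: "((\<lambda>x. x * real L / 2) has_real_derivative real L / 2) (at x)"
      by (auto intro!: derivative_eq_intros)
    have d2: "(cot has_real_derivative -inverse ((sin (x * real L / 2))\<^sup>2)) (at (x * real L / 2))"
      by (rule DERIV_cot) fact
    have d3: "((\<lambda>x. cot (x * real L / 2)) has_real_derivative
               -inverse ((sin (x * real L / 2))\<^sup>2) * (real L / 2)) (at x)"
      using DERIV_chain2[OF d2 d1] by simp
    have "(F has_real_derivative F' x) (at x)"
      unfolding F_def[abs_def] F'_def
      by (intro DERIV_diff DERIV_cmult DERIV_sin d3)
    moreover have "F' x > 0"
    proof -
      have s2: "(sin (x * real L / 2))\<^sup>2 > 0" "(sin (x * real L / 2))\<^sup>2 \<le> 1"
        using s sin_cos_squared_add[of "x * real L / 2"] zero_le_power2[of "cos (x * real L / 2)"]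
        by (simp, linarith)
      have "inverse ((sin (x * real L / 2))\<^sup>2) \<ge> 1" using s2 by (simp add: one_le_inverse)
      then have "U * real L / 8 * inverse ((sin (x * real L / 2))\<^sup>2) \<ge> U * real L / 8 * 1"
        using UL by (intro mult_left_mono) auto
      then have "U * real L / 8 * inverse ((sin (x * real L / 2))\<^sup>2) > 1" using UL by simp
      moreover have "F' x = cos x + U * real L / 8 * inverse ((sin (x * real L / 2))\<^sup>2)"
        by (simp add: F'_def field_simps)
      ultimately show ?thesis using cos_ge_minus_one[of x] by linarith
    qed
    ultimately show "(F has_real_derivative F' x) (at x) \<and> F' x > 0" by blast
  next
    fix M :: real
    obtain t where t: "0 < t" "t < 1" "cot t > 4 * (\<bar>M\<bar> + 1) / U" using cot_big by blast
    define x where "x = A l + 2 * t / real L"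
    have e: "x * real L / 2 = t + real (l - 1) * pi"
      using l L0 by (simp add: x_def A_def of_nat_diff field_simps)
    have c: "cot (x * real L / 2) = cot t" unfolding e by (rule cot_shift)
    have "U / 4 * cot t > \<bar>M\<bar> + 1" using t(3) assms(2) by (simp add: field_simps)
    then have "F x < M" unfolding F_def c using sin_le_one[of x] abs_ge_self[of M] by linarith
    moreover have "A l < x" using t L0 by (simp add: x_def)
    moreover have "x < B l" using t L0 pi_gt3 by (simp add: x_def A_def B_def field_simps)
    ultimately show "\<exists>x. A l < x \<and> x < B l \<and> F x < M" by blast
  next
    fix M :: real
    obtain t where t: "0 < t" "t < 1" "cot t > 4 * (\<bar>M\<bar> + 1) / U" using cot_big by blast
    define x where "x = B l - 2 * t / real L"
    have e: "x * real L / 2 = - t + real l * pi"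
      using l L0 by (simp add: x_def B_def field_simps)
    have c: "cot (x * real L / 2) = - cot t" unfolding e cot_shift by simp
    have "U / 4 * cot t > \<bar>M\<bar> + 1" using t(3) assms(2) by (simp add: field_simps)
    then have "F x > M" unfolding F_def c using sin_ge_minus_one[of x] abs_ge_minus_self[of M] by linarith
    moreover have "x < B l" using t L0 by (simp add: x_def)
    moreover have "A l < x" using t L0 pi_gt3 by (simp add: x_def A_def B_def field_simps)
    ultimately show "\<exists>x. A l < x \<and> x < B l \<and> F x > M" by blast
  qed
  define P where "P l g \<longleftrightarrow> (\<forall>\<Lambda>. A l < g \<Lambda> \<and> g \<Lambda> < B l \<and> F (g \<Lambda>) = \<Lambda>) \<and>
            (\<forall>x \<Lambda>. A l < x \<longrightarrow> x < B l \<longrightarrow> F x = \<Lambda> \<longrightarrow> x = g \<Lambda>) \<and>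
            (\<forall>\<Lambda>. \<exists>D. (g has_real_derivative D) (at \<Lambda>) \<and> D > 0) \<and>
            (g \<longlongrightarrow> A l) at_bot \<and> (g \<longlongrightarrow> B l) at_top" for l g
  have "\<forall>l\<in>{1..L}. \<exists>g. P l g" using branch unfolding P_def by blast
  from bchoice[OF this] obtain q where q0: "\<forall>l\<in>{1..L}. P l (q l)" by blast
  have q: "(\<forall>\<Lambda>. A l < q l \<Lambda> \<and> q l \<Lambda> < B l \<and> F (q l \<Lambda>) = \<Lambda>) \<and>
            (\<forall>x \<Lambda>. A l < x \<longrightarrow> x < B l \<longrightarrow> F x = \<Lambda> \<longrightarrow> x = q l \<Lambda>) \<and>
            (\<forall>\<Lambda>. \<exists>D. (q l has_real_derivative D) (at \<Lambda>) \<and> D > 0) \<and>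
            (q l \<longlongrightarrow> A l) at_bot \<and> (q l \<longlongrightarrow> B l) at_top" if "l \<in> {1..L}" for l
    using q0 that unfolding P_def by blast
  have AB: "0 \<le> A l" "B l \<le> 2 * pi" if "l \<in> {1..L}" for l
    using that L0 pi_gt_zero by (auto simp: A_def B_def field_simps)
  have BA: "B l \<le> A l'" if "l < l'" for l l'
  proof -
    have "real l \<le> real l' - 1" using that by simp
    then show ?thesis unfolding A_def B_def using L0 pi_gt_zero
      by (intro mult_right_mono) auto
  qed
  have part1: "{x \<in> {0..<2*pi}. takahashi_eq U L \<Lambda> x} = (\<lambda>l. q l \<Lambda>) ` {1..L}
           \<and> inj_on (\<lambda>l. q l \<Lambda>) {1..L}" for \<Lambda>
  proof (intro conjI)
    show "inj_on (\<lambda>l. q l \<Lambda>) {1..L}"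
    proof (rule inj_onI)
      fix l l' assume l: "l \<in> {1..L}" and l': "l' \<in> {1..L}" and e: "q l \<Lambda> = q l' \<Lambda>"
      show "l = l'"
      proof (rule ccontr)
        assume "l \<noteq> l'"
        then consider "l < l'" | "l' < l" by linarith
        then show False
        proof cases
          case 1
          have "q l \<Lambda> < B l" "A l' < q l' \<Lambda>" using q[OF l] q[OF l'] by auto
          then show False using BA[OF 1] e by linarith
        next
          case 2
          have "q l' \<Lambda> < B l'" "A l < q l \<Lambda>" using q[OF l] q[OF l'] by auto
          then show False using BA[OF 2] e by linarith
        qed
      qed
    qed
  next
    show "{x \<in> {0..<2*pi}. takahashi_eq U L \<Lambda> x} = (\<lambda>l. q l \<Lambda>) ` {1..L}"
    proof (intro equalityI subsetI)
      fix y assume "y \<in> (\<lambda>l. q l \<Lambda>) ` {1..L}"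
      then obtain l where l: "l \<in> {1..L}" and y: "y = q l \<Lambda>" by auto
      have y1: "A l < y" "y < B l" "F y = \<Lambda>" using q[OF l] y by auto
      have "sin (y * real L / 2) \<noteq> 0" using sin_nz[OF _ y1(1,2)] l by auto
      moreover have "sin y - \<Lambda> = U / 4 * cot (y * real L / 2)" using y1(3) by (auto simp: F_def)
      moreover have "y \<in> {0..<2*pi}" using y1 AB[OF l] by auto
      ultimately show "y \<in> {x \<in> {0..<2*pi}. takahashi_eq U L \<Lambda> x}"
        by (auto simp: takahashi_eq_def)
    next
      fix x assume "x \<in> {x \<in> {0..<2*pi}. takahashi_eq U L \<Lambda> x}"
      then have x: "0 \<le> x" "x < 2 * pi" "sin (x * real L / 2) \<noteq> 0"
        "sin x - \<Lambda> = U / 4 * cot (x * real L / 2)" by (auto simp: takahashi_eq_def)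
      define r where "r = x * real L / (2 * pi)"
      have r0: "0 \<le> r" "r < real L" using x L0 pi_gt_zero by (auto simp: r_def field_simps)
      define k where "k = nat \<lfloor>r\<rfloor>"
      have kk: "real k = of_int \<lfloor>r\<rfloor>" using r0 by (simp add: k_def)
      have k: "real k \<le> r" "r < real k + 1" unfolding kk by (rule of_int_floor_le, rule real_of_int_floor_add_one_gt)
      have "r \<noteq> real k"
      proof
        assume "r = real k"
        then have "x * real L / 2 = of_int (int k) * pi" using scale[of x] by (simp add: r_def)
        then show False using x(3) by (auto simp: sin_zero_iff_int2)
      qed
      then have k2: "real k < r" using k by auto
      have kL: "k < L" using k r0 by linarith
      define l where "l = Suc k"
      have l: "l \<in> {1..L}" using kL by (auto simp: l_def)
      have "A l < x" using k2 L0 pi_gt_zero by (simp add: A_def l_def r_def field_simps)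
      moreover have "x < B l" using k L0 pi_gt_zero by (simp add: B_def l_def r_def field_simps)
      moreover have "F x = \<Lambda>" using x(4) by (simp add: F_def)
      ultimately have "x = q l \<Lambda>" using q[OF l] by blast
      then show "x \<in> (\<lambda>l. q l \<Lambda>) ` {1..L}" using l by blast
    qed
  qed
  show ?thesis
  proof (intro exI[of _ q] conjI allI ballI)
    fix \<Lambda> show "{x \<in> {0..<2*pi}. takahashi_eq U L \<Lambda> x} = (\<lambda>l. q l \<Lambda>) ` {1..L}"
      using part1 by blast
  next
    fix \<Lambda> show "inj_on (\<lambda>l. q l \<Lambda>) {1..L}" using part1 by blast
  next
    fix l \<Lambda> assume l: "l \<in> {1..L}"
    have h: "A l < q l \<Lambda>" "q l \<Lambda> < B l" using q[OF l] by blast+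
    show "(real l - 1) * (2*pi / real L) \<le> q l \<Lambda>" using h(1) by (simp add: A_def)
    show "q l \<Lambda> \<le> real l * (2*pi / real L)" using h(2) by (simp add: B_def)
  next
    fix l \<Lambda> assume l: "l \<in> {1..L}"
    show "\<exists>D. (q l has_real_derivative D) (at \<Lambda>) \<and> D > 0" using q[OF l] by blast
  next
    fix l assume l: "l \<in> {1..L}"
    show "(q l \<longlongrightarrow> (real l - 1) * (2*pi / real L)) at_bot" using q[OF l] by (simp add: A_def)
    show "(q l \<longlongrightarrow> real l * (2*pi / real L)) at_top" using q[OF l] by (simp add: B_def)
  qed
qed

end
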